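(* Let $M>0$ and $\alpha>0$. There exist $\varepsilon_0>0$ and $l\in\mathbb N$ such that the following holds. Let $\varepsilon<\varepsilon_0$, $S\in\mathcal A(M,\varepsilon,\alpha)$, and let $T=\phi(j_1,\dots,j_m)(L)$ be an $m$-block of $C_S$. Let $F:T\to L$ be a $C^1$ map with nonvanishing derivative and $\mathcal N(F)<1/2$, such that $F$ maps each connected component of $T\setminus C_S$ onto a connected component of $L\setminus C_S$, and suppose there is a gap $\phi(j_1,\dots,j_m,i_1,\dots,i_p)(J_i)\subset T$ of level $m+p$ with $F\big(\phi(j_1,\dots,j_m,i_1,\dots,i_p)(J_i)\big)=J_j$ for some $1\le i,j\le k-1$. Then $p\le l$.
   Context: Setting: $k\ge2$; $I_1,\dots,I_k$ pairwise disjoint compact intervals in $[0,1)$ ordered left to right; $L\subset[0,1)$ compact interval containing $I=I_1\cup\dots\cup I_k$. $\mathcal S^{r}(I_1,\dots,I_k,L)$: $C^r$ maps $S:I\to L$ with $S(I_j)=L$ for all $j$ and $|S'|>1$; $C_S=\{x\in I:S^n(x)\in I\ \forall n\ge1\}$. For a $C^1$ map $F$ with nonvanishing derivative on an interval $T$, $\mathcal N(F)=\sup_{x,y\in T}\log\frac{|F'(x)|}{|F'(y)|}$; for $S$, $\mathcal N(S)=\max_j\sup_{x,y\in I_j}\log\frac{|S'(x)|}{|S'(y)|}$. $\mathcal A(M,\varepsilon,\alpha)$ is the set of $S\in\mathcal S^{1+\alpha}(I_1,\dots,I_k,L)$ with $\mathcal N(S)<\varepsilon$ and $|\log\frac{|S'(x)|}{|S'(y)|}|\le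 M|x-y|^\alpha$ for $x,y$ in a common $I_j$. Inverse branches $\phi_i=(S|_{I_i})^{-1}$, $\phi(i_1,\dots,i_m)=\phi_{i_1}\circ\dots\circ\phi_{i_m}$; $\phi(i_1,\dots,i_m)(L)$ is an $m$-block. $J_i$ ($1\le i\le k-1$) is the open interval between $I_i$ and $I_{i+1}$; $\phi(i_1,\dots,i_r)(J_i)$ is a gap of level $r$. *)

theory Defs
  imports "HOL-Analysis.Analysis"
begin

text \<open>Standing setting: k \<ge> 2 intervals I_j = {a j..b j} (j = 1..k), ordered left to right
  and pairwise disjoint, all in L = {c..d} \<subseteq> [0,1).\<close>
definition setting :: "nat \<Rightarrow> (nat \<Rightarrow> real) \<Rightarrow> (nat \<Rightarrow> real) \<Rightarrow> real \<Rightarrow> real \<Rightarrow> bool" where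
  "setting k a b c d \<longleftrightarrow> k \<ge> 2 \<and> (\<forall>j\<in>{1..k}. a j \<le> b j) \<and>
     (\<forall>j\<in>{1..<k}. b j < a (Suc j)) \<and> 0 \<le> c \<and> c \<le> d \<and> d < 1 \<and>
     (\<forall>j\<in>{1..k}. {a j..b j} \<subseteq> {c..d})"

definition Iset :: "nat \<Rightarrow> (nat \<Rightarrow> real) \<Rightarrow> (nat \<Rightarrow> real) \<Rightarrow> real set" where
  "Iset k a b = (\<Union>j\<in>{1..k}. {a j..b j})"

definition C1_on :: "real set \<Rightarrow> (real \<Rightarrow> real) \<Rightarrow> (real \<Rightarrow> real) \<Rightarrow> bool" where
  "C1_on T F F' \<longleftrightarrow> (\<forall>x\<in>T. (F has_real_derivative F' x) (at x within T)) \<and> continuous_on T F'"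

definition holder_on :: "real \<Rightarrow> real set \<Rightarrow> (real \<Rightarrow> real) \<Rightarrow> bool" where
  "holder_on \<alpha> T g \<longleftrightarrow> (\<exists>H. \<forall>x\<in>T. \<forall>y\<in>T. \<bar>g x - g y\<bar> \<le> H * \<bar>x - y\<bar> powr \<alpha>)"

definition in_S_class :: "nat \<Rightarrow> (nat \<Rightarrow> real) \<Rightarrow> (nat \<Rightarrow> real) \<Rightarrow> real \<Rightarrow> real \<Rightarrow> real
    \<Rightarrow> (real \<Rightarrow> real) \<Rightarrow> (real \<Rightarrow> real) \<Rightarrow> bool" where
  "in_S_class k a b c d \<alpha> S S' \<longleftrightarrow>
     (\<forall>j\<in>{1..k}. C1_on {a j..b j} S S' \<and> holder_on \<alpha> {a j..b j} S' \<and> S ` {a j..b j} = {c..d}) \<and>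
     (\<forall>x\<in>Iset k a b. \<bar>S' x\<bar> > 1)"

definition distortion :: "real set \<Rightarrow> (real \<Rightarrow> real) \<Rightarrow> real" where
  "distortion T F' = (SUP x\<in>T. SUP y\<in>T. ln (\<bar>F' x\<bar> / \<bar>F' y\<bar>))"

definition NS :: "nat \<Rightarrow> (nat \<Rightarrow> real) \<Rightarrow> (nat \<Rightarrow> real) \<Rightarrow> (real \<Rightarrow> real) \<Rightarrow> real" where
  "NS k a b S' = Max ((\<lambda>j. distortion {a j..b j} S') ` {1..k})"

definition in_A :: "nat \<Rightarrow> (nat \<Rightarrow> real) \<Rightarrow> (nat \<Rightarrow> real) \<Rightarrow> real \<Rightarrow> real \<Rightarrow> real \<Rightarrow> real \<Rightarrow> real
    \<Rightarrow> (real \<Rightarrow> real) \<Rightarrow> (real \<Rightarrow> real) \<Rightarrow> bool" where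
  "in_A k a b c d M \<epsilon> \<alpha> S S' \<longleftrightarrow> in_S_class k a b c d \<alpha> S S' \<and> NS k a b S' < \<epsilon> \<and>
     (\<forall>j\<in>{1..k}. \<forall>x\<in>{a j..b j}. \<forall>y\<in>{a j..b j}.
        \<bar>ln (\<bar>S' x\<bar> / \<bar>S' y\<bar>)\<bar> \<le> M * \<bar>x - y\<bar> powr \<alpha>)"

definition CS :: "nat \<Rightarrow> (nat \<Rightarrow> real) \<Rightarrow> (nat \<Rightarrow> real) \<Rightarrow> (real \<Rightarrow> real) \<Rightarrow> real set" where
  "CS k a b S = {x \<in> Iset k a b. \<forall>n\<ge>1. (S ^^ n) x \<in> Iset k a b}"

definition phi :: "(nat \<Rightarrow> real) \<Rightarrow> (nat \<Rightarrow> real) \<Rightarrow> (real \<Rightarrow> real) \<Rightarrow> nat \<Rightarrow> real \<Rightarrow> real" where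
  "phi a b S i = the_inv_into {a i..b i} S"

definition phiw :: "(nat \<Rightarrow> real) \<Rightarrow> (nat \<Rightarrow> real) \<Rightarrow> (real \<Rightarrow> real) \<Rightarrow> nat list \<Rightarrow> real \<Rightarrow> real" where
  "phiw a b S ws = foldr (\<lambda>i f. phi a b S i \<circ> f) ws id"

definition gapJ :: "(nat \<Rightarrow> real) \<Rightarrow> (nat \<Rightarrow> real) \<Rightarrow> nat \<Rightarrow> real set" where
  "gapJ a b i = {b i<..<a (Suc i)}"

end

theory Submission imports Defs begin

lemma mvt_iv:
  fixes T :: "real set" and F F' :: "real \<Rightarrow> real"
  assumes T: "is_interval T" and D: "\<forall>x\<in>T. (F has_real_derivative F' x) (at x within T)"
    and x: "x \<in> T" and y: "y \<in> T"
  shows "\<exists>\<xi>. min x y \<le> \<xi> \<and> \<xi> \<le> max x y \<and> \<xi> \<in> T \<and> F y - F x = F' \<xi> * (y - x)"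
proof -
  have gen: "\<exists>\<xi>\<in>{u..v}. F v - F u = F' \<xi> * (v - u)" if uv: "u \<in> T" "v \<in> T" "u \<le> v" for u v
  proof -
    have sub: "{u..v} \<subseteq> T" using T uv mem_is_interval_1_I[OF T uv(1) uv(2)] by auto
    have "(F has_derivative (\<lambda>h. F' z * h)) (at z within {u..v})" if "u \<le> z" "z \<le> v" for z
    proof -
      have "z \<in> T" using sub that by auto
      then have "(F has_real_derivative F' z) (at z within {u..v})"
        using D sub by (meson DERIV_subset)
      then show ?thesis by (simp add: has_field_derivative_def)
    qed
    from mvt_very_simple[OF uv(3) this] show ?thesis by auto
  qed
  show ?thesis
  proof (cases "x \<le> y")
    case True
    from gen[OF x y True] obtain \<xi> where "\<xi>\<in>{x..y}" "F y - F x = F' \<xi> * (y - x)" by blast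
    moreover have "\<xi> \<in> T" using mem_is_interval_1_I[OF T x y] \<open>\<xi>\<in>{x..y}\<close> by auto
    ultimately show ?thesis using True by (intro exI[of _ \<xi>]) auto
  next
    case False
    from gen[OF y x] False obtain \<xi> where "\<xi>\<in>{y..x}" "F x - F y = F' \<xi> * (x - y)" by force
    moreover have "\<xi> \<in> T" using mem_is_interval_1_I[OF T y x] \<open>\<xi>\<in>{y..x}\<close> by auto
    ultimately show ?thesis using False by (intro exI[of _ \<xi>]) (auto simp: algebra_simps)
  qed
qed

lemma distortion_ge:
  fixes T :: "real set" and g :: "real \<Rightarrow> real"
  assumes "compact T" "continuous_on T g" "\<forall>x\<in>T. g x \<noteq> 0" "x \<in> T" "y \<in> T"
  shows "ln (\<bar>g x\<bar> / \<bar>g y\<bar>) \<le> distortion T g"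
proof -
  have ne: "T \<noteq> {}" using assms by auto
  have c1: "continuous_on T (\<lambda>x. \<bar>g x\<bar>)" using assms(2) by (intro continuous_intros)
  obtain xm where xm: "xm \<in> T" "\<forall>z\<in>T. \<bar>g z\<bar> \<le> \<bar>g xm\<bar>"
    using continuous_attains_sup[OF assms(1) ne c1] by blast
  obtain xn where xn: "xn \<in> T" "\<forall>z\<in>T. \<bar>g xn\<bar> \<le> \<bar>g z\<bar>"
    using continuous_attains_inf[OF assms(1) ne c1] by blast
  define B where "B = ln (\<bar>g xm\<bar> / \<bar>g xn\<bar>)"
  have mpos: "\<bar>g xn\<bar> > 0" using xn assms(3) by auto
  have bnd: "ln (\<bar>g u\<bar> / \<bar>g v\<bar>) \<le> B" if "u \<in> T" "v \<in> T" for u v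
  proof -
    have "\<bar>g u\<bar> > 0" "\<bar>g v\<bar> > 0" using that assms(3) by auto
    moreover have "\<bar>g u\<bar> / \<bar>g v\<bar> \<le> \<bar>g xm\<bar> / \<bar>g xn\<bar>"
      using that xm xn mpos by (intro frac_le) auto
    moreover have "\<bar>g u\<bar> / \<bar>g v\<bar> > 0" using calculation by simp
    ultimately have "0 < \<bar>g xm\<bar> / \<bar>g xn\<bar>" by linarith
    with \<open>\<bar>g u\<bar> / \<bar>g v\<bar> \<le> _\<close> \<open>\<bar>g u\<bar> / \<bar>g v\<bar> > 0\<close>
    show ?thesis unfolding B_def by (subst ln_le_cancel_iff) auto
  qed
  have inner: "(SUP v\<in>T. ln (\<bar>g u\<bar> / \<bar>g v\<bar>)) \<le> B" if "u \<in> T" for u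
    using bnd that ne by (intro cSUP_least) auto
  have "ln (\<bar>g x\<bar> / \<bar>g y\<bar>) \<le> (SUP v\<in>T. ln (\<bar>g x\<bar> / \<bar>g v\<bar>))"
    using bnd assms(4,5) by (intro cSUP_upper) (auto intro!: bdd_aboveI2)
  also have "\<dots> \<le> distortion T g" unfolding distortion_def
    using inner assms(4) by (intro cSUP_upper) (auto intro!: bdd_aboveI2)
  finally show ?thesis .
qed

lemma phiw_Nil[simp]: "phiw a b S [] x = x" by (simp add: phiw_def)
lemma phiw_Cons[simp]: "phiw a b S (i#w) x = phi a b S i (phiw a b S w x)" by (simp add: phiw_def)
lemma phiw_append: "phiw a b S (xs@ys) x = phiw a b S xs (phiw a b S ys x)"
  by (induction xs) auto

lemma step_arith:
  fixes A B C E p' q' u' v' u v s1 s2 D h P :: real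
  assumes "p' - q' = s1 * (A - B)" "v' - u' = s2 * (C - E)" "s1 \<noteq> 0"
    "\<bar>s2\<bar> \<le> exp h * \<bar>s1\<bar>" "\<bar>p' - q'\<bar> * \<bar>v - u\<bar> \<le> exp D * P * \<bar>v' - u'\<bar>" "P \<ge> 0"
  shows "\<bar>A - B\<bar> * \<bar>v - u\<bar> \<le> exp (D + h) * P * \<bar>C - E\<bar>"
proof -
  have "(\<bar>A - B\<bar> * \<bar>v - u\<bar>) * \<bar>s1\<bar> = \<bar>p' - q'\<bar> * \<bar>v - u\<bar>"
    using assms(1) by (simp add: abs_mult)
  also have "\<dots> \<le> exp D * P * \<bar>v' - u'\<bar>" by fact
  also have "\<dots> = exp D * P * \<bar>C - E\<bar> * \<bar>s2\<bar>" using assms(2) by (simp add: abs_mult)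
  also have "\<dots> \<le> exp D * P * \<bar>C - E\<bar> * (exp h * \<bar>s1\<bar>)"
    using assms(4,6) by (intro mult_left_mono) auto
  also have "\<dots> = (exp (D + h) * P * \<bar>C - E\<bar>) * \<bar>s1\<bar>" by (simp add: exp_add)
  finally show ?thesis using assms(3) by (simp add: mult_le_cancel_right)
qed

lemma between_bound:
  fixes x y A B C E r :: real
  assumes "min A B \<le> x" "x \<le> max A B" "min C E \<le> y" "y \<le> max C E"
    "\<bar>A - C\<bar> \<le> r" "\<bar>A - E\<bar> \<le> r" "\<bar>B - C\<bar> \<le> r" "\<bar>B - E\<bar> \<le> r"
  shows "\<bar>x - y\<bar> \<le> r"
  using assms by (smt (verit))

locale ctx =
  fixes k :: nat and a b :: "nat \<Rightarrow> real" and c d M \<alpha> r :: real and S S' :: "real \<Rightarrow> real"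
  assumes sett: "setting k a b c d"
  and C1: "\<forall>j\<in>{1..k}. C1_on {a j..b j} S S'"
  and onto: "\<forall>j\<in>{1..k}. S ` {a j..b j} = {c..d}"
  and lam: "\<forall>j\<in>{1..k}. \<forall>x\<in>{a j..b j}. 1 \<le> r * \<bar>S' x\<bar>"
  and r: "0 < r" "r < 1"
  and hold: "\<forall>j\<in>{1..k}. \<forall>x\<in>{a j..b j}. \<forall>y\<in>{a j..b j}.
        \<bar>ln (\<bar>S' x\<bar> / \<bar>S' y\<bar>)\<bar> \<le> M * \<bar>x - y\<bar> powr \<alpha>"
  and M\<alpha>: "M > 0" "\<alpha> > 0"
begin

definition Dn :: "nat \<Rightarrow> real" where
  "Dn n = M * (d - c) powr \<alpha> * (\<Sum>t<n. (r powr \<alpha>) ^ (t + 1))"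

lemma IinL: "j \<in> {1..k} \<Longrightarrow> {a j..b j} \<subseteq> {c..d}"
  using sett unfolding setting_def by blast

lemma Sd: "j \<in> {1..k} \<Longrightarrow> x \<in> {a j..b j} \<Longrightarrow> S' x \<noteq> 0"
proof -
  assume "j \<in> {1..k}" "x \<in> {a j..b j}"
  then have "1 \<le> r * \<bar>S' x\<bar>" using lam by blast
  then show "S' x \<noteq> 0" by auto
qed

lemma mvtS:
  assumes "j \<in> {1..k}" "x \<in> {a j..b j}" "y \<in> {a j..b j}"
  shows "\<exists>\<xi>. min x y \<le> \<xi> \<and> \<xi> \<le> max x y \<and> \<xi> \<in> {a j..b j} \<and> S y - S x = S' \<xi> * (y - x)"
proof -
  have "C1_on {a j..b j} S S'" using C1 assms(1) by blast
  then show ?thesis using mvt_iv[OF is_interval_cc _ assms(2,3)] unfolding C1_on_def by blast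
qed

lemma injS: assumes "j \<in> {1..k}" shows "inj_on S {a j..b j}"
proof (rule inj_onI, rule ccontr)
  fix x y assume xy: "x \<in> {a j..b j}" "y \<in> {a j..b j}" "S x = S y" "x \<noteq> y"
  from mvtS[OF assms xy(1,2)] obtain \<xi> where "\<xi> \<in> {a j..b j}" "S y - S x = S' \<xi> * (y - x)" by blast
  with xy(3,4) have "S' \<xi> = 0" by simp
  with Sd[OF assms \<open>\<xi> \<in> {a j..b j}\<close>] show False by simp
qed

lemma phi_in: assumes "j \<in> {1..k}" "y \<in> {c..d}" shows "phi a b S j y \<in> {a j..b j}"
proof -
  have "y \<in> S ` {a j..b j}" using onto assms by blast
  then show ?thesis unfolding phi_def using injS[OF assms(1)] by (intro the_inv_into_into) auto
qed

lemma S_phi: assumes "j \<in> {1..k}" "y \<in> {c..d}" shows "S (phi a b S j y) = y"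
proof -
  have "y \<in> S ` {a j..b j}" using onto assms by blast
  then show ?thesis unfolding phi_def using injS[OF assms(1)] by (intro f_the_inv_into_f) auto
qed

lemma phi_contr:
  assumes "j \<in> {1..k}" "p \<in> {c..d}" "q \<in> {c..d}"
  shows "\<bar>phi a b S j p - phi a b S j q\<bar> \<le> r * \<bar>p - q\<bar>"
proof -
  let ?x = "phi a b S j p" and ?y = "phi a b S j q"
  from mvtS[OF assms(1) phi_in[OF assms(1,3)] phi_in[OF assms(1,2)]] obtain \<xi> where
    \<xi>: "\<xi> \<in> {a j..b j}" "S ?x - S ?y = S' \<xi> * (?x - ?y)" by blast
  have "p - q = S' \<xi> * (?x - ?y)" using \<xi> S_phi assms by simp
  then have eq: "r * \<bar>p - q\<bar> = (r * \<bar>S' \<xi>\<bar>) * \<bar>?x - ?y\<bar>" by (simp add: abs_mult)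
  have "1 \<le> r * \<bar>S' \<xi>\<bar>" using lam assms \<xi> by blast
  then have m: "1 * \<bar>?x - ?y\<bar> \<le> (r * \<bar>S' \<xi>\<bar>) * \<bar>?x - ?y\<bar>"
    by (rule mult_right_mono) simp
  show ?thesis using m unfolding eq[symmetric] by simp
qed

lemma main_ind:
  assumes "set W \<subseteq> {1..k}"
  shows "(\<forall>p\<in>{c..d}. phiw a b S W p \<in> {c..d}) \<and>
    (\<forall>p\<in>{c..d}. \<forall>q\<in>{c..d}. \<bar>phiw a b S W p - phiw a b S W q\<bar> \<le> r ^ length W * \<bar>p - q\<bar>) \<and>
    (\<forall>p\<in>{c..d}. \<forall>q\<in>{c..d}. \<forall>u\<in>{c..d}. \<forall>v\<in>{c..d}.
       \<bar>phiw a b S W p - phiw a b S W q\<bar> * \<bar>v - u\<bar> \<le>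
         exp (Dn (length W)) * \<bar>p - q\<bar> * \<bar>phiw a b S W v - phiw a b S W u\<bar>)"
  using assms
proof (induction W)
  case Nil
  then show ?case by (simp add: Dn_def)
next
  case (Cons i w)
  let ?f = "phiw a b S w" and ?g = "phi a b S i" and ?n = "length w"
  have i: "i \<in> {1..k}" and w: "set w \<subseteq> {1..k}" using Cons.prems by auto
  note IH = Cons.IH[OF w]
  have IH1: "\<And>p. p \<in> {c..d} \<Longrightarrow> ?f p \<in> {c..d}" using IH by blast
  have IH2: "\<And>p q. p \<in> {c..d} \<Longrightarrow> q \<in> {c..d} \<Longrightarrow> \<bar>?f p - ?f q\<bar> \<le> r ^ ?n * \<bar>p - q\<bar>"
    using IH by blast
  have IH3: "\<And>p q u v. p \<in> {c..d} \<Longrightarrow> q \<in> {c..d} \<Longrightarrow> u \<in> {c..d} \<Longrightarrow> v \<in> {c..d} \<Longrightarrow>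
     \<bar>?f p - ?f q\<bar> * \<bar>v - u\<bar> \<le> exp (Dn ?n) * \<bar>p - q\<bar> * \<bar>?f v - ?f u\<bar>"
    using IH by blast
  have P1: "\<forall>p\<in>{c..d}. phiw a b S (i#w) p \<in> {c..d}"
  proof
    fix p assume "p \<in> {c..d}"
    then have "?f p \<in> {c..d}" by (rule IH1)
    then have "?g (?f p) \<in> {a i..b i}" by (rule phi_in[OF i])
    then show "phiw a b S (i#w) p \<in> {c..d}" using IinL[OF i] by auto
  qed
  have P2: "\<bar>phiw a b S (i#w) p - phiw a b S (i#w) q\<bar> \<le> r ^ length (i#w) * \<bar>p - q\<bar>"
    if "p \<in> {c..d}" "q \<in> {c..d}" for p q
  proof -
    have "\<bar>?g (?f p) - ?g (?f q)\<bar> \<le> r * \<bar>?f p - ?f q\<bar>"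
      using phi_contr[OF i] IH1 that by blast
    also have "\<dots> \<le> r * (r ^ ?n * \<bar>p - q\<bar>)" using IH2 that r by (intro mult_left_mono) auto
    finally show ?thesis by simp
  qed
  have P3: "\<bar>phiw a b S (i#w) p - phiw a b S (i#w) q\<bar> * \<bar>v - u\<bar> \<le>
         exp (Dn (length (i#w))) * \<bar>p - q\<bar> * \<bar>phiw a b S (i#w) v - phiw a b S (i#w) u\<bar>"
    if pq: "p \<in> {c..d}" "q \<in> {c..d}" "u \<in> {c..d}" "v \<in> {c..d}" for p q u v
  proof -
    have L: "?f p \<in> {c..d}" "?f q \<in> {c..d}" "?f u \<in> {c..d}" "?f v \<in> {c..d}" using IH1 pq by auto
    obtain \<xi> where \<xi>: "min (?g (?f q)) (?g (?f p)) \<le> \<xi>" "\<xi> \<le> max (?g (?f q)) (?g (?f p))"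
      "\<xi> \<in> {a i..b i}" "S (?g (?f p)) - S (?g (?f q)) = S' \<xi> * (?g (?f p) - ?g (?f q))"
      using mvtS[OF i phi_in[OF i L(2)] phi_in[OF i L(1)]] by blast
    obtain \<eta> where \<eta>: "min (?g (?f u)) (?g (?f v)) \<le> \<eta>" "\<eta> \<le> max (?g (?f u)) (?g (?f v))"
      "\<eta> \<in> {a i..b i}" "S (?g (?f v)) - S (?g (?f u)) = S' \<eta> * (?g (?f v) - ?g (?f u))"
      using mvtS[OF i phi_in[OF i L(3)] phi_in[OF i L(4)]] by blast
    have e1: "?f p - ?f q = S' \<xi> * (?g (?f p) - ?g (?f q))" using \<xi>(4) S_phi[OF i] L by simp
    have e2: "?f v - ?f u = S' \<eta> * (?g (?f v) - ?g (?f u))" using \<eta>(4) S_phi[OF i] L by simp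
    define R where "R = r ^ Suc ?n * (d - c)"
    have dist: "\<bar>?g (?f x) - ?g (?f y)\<bar> \<le> R" if "x \<in> {c..d}" "y \<in> {c..d}" for x y
    proof -
      have "\<bar>?g (?f x) - ?g (?f y)\<bar> \<le> r ^ Suc ?n * \<bar>x - y\<bar>" using P2 that by simp
      also have "\<dots> \<le> R" unfolding R_def using that r by (intro mult_left_mono) auto
      finally show ?thesis .
    qed
    have xe: "\<bar>\<eta> - \<xi>\<bar> \<le> R"
      using between_bound[OF \<eta>(1,2) \<xi>(1,2)] dist pq by simp
    have R0: "R \<ge> 0" unfolding R_def using r pq by auto
    define h where "h = M * (d - c) powr \<alpha> * (r powr \<alpha>) ^ (?n + 1)"
    have hR: "M * \<bar>\<eta> - \<xi>\<bar> powr \<alpha> \<le> h"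
    proof -
      have "\<bar>\<eta> - \<xi>\<bar> powr \<alpha> \<le> R powr \<alpha>" using xe M\<alpha> by (intro powr_mono2) auto
      also have "R powr \<alpha> = (d - c) powr \<alpha> * (r powr \<alpha>) ^ (?n + 1)"
        unfolding R_def using r pq
        by (simp add: powr_mult powr_power powr_powr powr_realpow[symmetric] mult.commute)
      finally show ?thesis unfolding h_def using M\<alpha> by (simp add: mult.assoc)
    qed
    have s: "\<bar>S' \<eta>\<bar> \<le> exp h * \<bar>S' \<xi>\<bar>"
    proof -
      have "ln (\<bar>S' \<eta>\<bar> / \<bar>S' \<xi>\<bar>) \<le> h" using hold i \<xi>(3) \<eta>(3) hR
        by (meson abs_le_D1 order_trans)
      then have "exp (ln (\<bar>S' \<eta>\<bar> / \<bar>S' \<xi>\<bar>)) \<le> exp h" by simp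
      then have "\<bar>S' \<eta>\<bar> / \<bar>S' \<xi>\<bar> \<le> exp h"
        using Sd[OF i \<xi>(3)] Sd[OF i \<eta>(3)] by simp
      then show ?thesis using Sd[OF i \<xi>(3)] by (simp add: divide_le_eq)
    qed
    have "\<bar>?g (?f p) - ?g (?f q)\<bar> * \<bar>v - u\<bar> \<le> exp (Dn ?n + h) * \<bar>p - q\<bar> * \<bar>?g (?f v) - ?g (?f u)\<bar>"
      using step_arith[OF e1 e2 Sd[OF i \<xi>(3)] s IH3[OF pq]] by simp
    moreover have "Dn ?n + h = Dn (length (i#w))" unfolding Dn_def h_def by (simp add: algebra_simps)
    ultimately show ?thesis by simp
  qed
  show ?case using P1 P2 P3 by blast
qed

lemma Dn_le: "Dn n \<le> M * (d - c) powr \<alpha> / (1 - r powr \<alpha>)"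
proof -
  have q: "0 \<le> r powr \<alpha>" "r powr \<alpha> < 1"
    using r M\<alpha> powr_less_mono2[of \<alpha> r 1] by auto
  have "(\<Sum>t<n. (r powr \<alpha>) ^ (t + 1)) \<le> (\<Sum>t<n. (r powr \<alpha>) ^ t)"
    using q by (intro sum_mono) (auto intro!: mult_left_le_one_le)
  also have "\<dots> = (1 - (r powr \<alpha>) ^ n) / (1 - r powr \<alpha>)" using q by (simp add: sum_gp_strict)
  also have "\<dots> \<le> 1 / (1 - r powr \<alpha>)" using q by (intro divide_right_mono) auto
  finally have "(\<Sum>t<n. (r powr \<alpha>) ^ (t + 1)) \<le> 1 / (1 - r powr \<alpha>)" .
  then have "M * (d - c) powr \<alpha> * (\<Sum>t<n. (r powr \<alpha>) ^ (t + 1)) \<le> M * (d - c) powr \<alpha> * (1 / (1 - r powr \<alpha>))"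
    using M\<alpha> by (intro mult_left_mono) auto
  then show ?thesis unfolding Dn_def by simp
qed

end

theorem lemma3:
  fixes k :: nat and a b :: "nat \<Rightarrow> real" and c d M \<alpha> :: real
  assumes "setting k a b c d" and "M > 0" and "\<alpha> > 0"
  shows "\<exists>\<epsilon>0>0. \<exists>l::nat. \<forall>\<epsilon> S S' js ps i j F F'.
     \<epsilon> < \<epsilon>0 \<and> in_A k a b c d M \<epsilon> \<alpha> S S' \<and>
     set js \<subseteq> {1..k} \<and> set ps \<subseteq> {1..k} \<and> i \<in> {1..k-1} \<and> j \<in> {1..k-1} \<and>
     C1_on (phiw a b S js ` {c..d}) F F' \<and> F ` (phiw a b S js ` {c..d}) \<subseteq> {c..d} \<and>
     (\<forall>x\<in>phiw a b S js ` {c..d}. F' x \<noteq> 0) \<and>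
     distortion (phiw a b S js ` {c..d}) F' < 1/2 \<and>
     (\<forall>U\<in>components (phiw a b S js ` {c..d} - CS k a b S).
        F ` U \<in> components ({c..d} - CS k a b S)) \<and>
     phiw a b S (js @ ps) ` gapJ a b i \<subseteq> phiw a b S js ` {c..d} \<and>
     F ` (phiw a b S (js @ ps) ` gapJ a b i) = gapJ a b j
     \<longrightarrow> length ps \<le> l"
proof -
  note sett = assms(1)
  have k2: "k \<ge> 2" and ab: "\<forall>j\<in>{1..k}. a j \<le> b j" and ba: "\<forall>j\<in>{1..<k}. b j < a (Suc j)"
    and cd0: "0 \<le> c" "c \<le> d" "d < 1" and IL: "\<forall>j\<in>{1..k}. {a j..b j} \<subseteq> {c..d}"
    using sett unfolding setting_def by auto
  have IL': "c \<le> a j" "b j \<le> d" if "j \<in> {1..k}" for j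
  proof -
    have "a j \<le> b j" using ab that by blast
    moreover have "{a j..b j} \<subseteq> {c..d}" using IL that by blast
    ultimately show "c \<le> a j" "b j \<le> d" by auto
  qed
  have cd: "c < d"
  proof -
    have "1 \<in> {1..k}" "2 \<in> {1..k}" "1 \<in> {1..<k}" using k2 by auto
    then have "c \<le> a 1" "a 1 \<le> b 1" "b 1 < a 2" "a 2 \<le> b 2" "b 2 \<le> d"
      using IL' ab ba by (auto simp: numeral_2_eq_2)
    then show ?thesis by linarith
  qed
  have wid: "b j - a j < d - c" if j: "j \<in> {1..k}" for j
  proof (cases "j < k")
    case True
    then have "j \<in> {1..<k}" "Suc j \<in> {1..k}" using j by auto
    then have "b j < a (Suc j)" "a (Suc j) \<le> b (Suc j)" "b (Suc j) \<le> d" "c \<le> a j"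
      using ba ab IL' j by auto
    then show ?thesis by linarith
  next
    case False
    then have jk: "j = k" using j by auto
    have "k - 1 \<in> {1..<k}" "k - 1 \<in> {1..k}" "Suc (k - 1) = k" using k2 by auto
    then have "b (k - 1) < a k" "c \<le> a (k - 1)" "a (k - 1) \<le> b (k - 1)" "b k \<le> d"
      using ba ab IL' k2 by (metis, auto)
    then show ?thesis unfolding jk by linarith
  qed
  define w where "w = max (Max ((\<lambda>j. b j - a j) ` {1..k})) ((d - c) / 2)"
  have wlt: "w < d - c" unfolding w_def using wid cd k2 by auto
  have wpos: "w > 0" unfolding w_def using cd by (simp add: less_max_iff_disj)
  have wge: "b j - a j \<le> w" if "j \<in> {1..k}" for j
    unfolding w_def using that by (auto intro!: max.coboundedI1)
  define \<rho> where "\<rho> = (d - c) / w"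
  have \<rho>1: "\<rho> > 1" unfolding \<rho>_def using wlt wpos by simp
  define \<epsilon>0 where "\<epsilon>0 = ln \<rho> / 2"
  have \<epsilon>0pos: "\<epsilon>0 > 0" unfolding \<epsilon>0_def using \<rho>1 by simp
  have \<rho>exp: "\<rho> = exp \<epsilon>0 * exp \<epsilon>0"
  proof -
    have "exp \<epsilon>0 * exp \<epsilon>0 = exp (ln \<rho>)" unfolding \<epsilon>0_def by (simp flip: exp_add)
    then show ?thesis using \<rho>1 by simp
  qed
  define r where "r = exp (- \<epsilon>0)"
  have r: "0 < r" "r < 1" unfolding r_def using \<epsilon>0pos by auto
  have rinv: "r * exp \<epsilon>0 = 1" unfolding r_def by (simp flip: exp_add)
  define Dmax where "Dmax = M * (d - c) powr \<alpha> / (1 - r powr \<alpha>)"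
  define Jmin where "Jmin = Min ((\<lambda>j. a (Suc j) - b j) ` {1..k-1})"
  have Jne: "{1..k-1} \<noteq> {}" using k2 by auto
  have Jpos: "Jmin > 0" unfolding Jmin_def using Jne ba by auto
  have Jle: "Jmin \<le> a (Suc j) - b j" if "j \<in> {1..k-1}" for j
    unfolding Jmin_def using that by auto
  define K where "K = 2 * exp (1/2 + Dmax) * (d - c) / Jmin"
  obtain l where l: "K < (exp \<epsilon>0) ^ l" using real_arch_pow[of "exp \<epsilon>0" K] \<epsilon>0pos by auto
  show ?thesis
  proof (rule exI[of _ \<epsilon>0], rule conjI[OF \<epsilon>0pos], rule exI[of _ l], intro allI impI, goal_cases)
    case (1 \<epsilon> S S' js ps i j F F')
    then have H: "\<epsilon> < \<epsilon>0" "in_A k a b c d M \<epsilon> \<alpha> S S'" "set js \<subseteq> {1..k}" "set ps \<subseteq> {1..k}"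
      "i \<in> {1..k-1}" "j \<in> {1..k-1}" "C1_on (phiw a b S js ` {c..d}) F F'"
      "F ` (phiw a b S js ` {c..d}) \<subseteq> {c..d}" "\<forall>x\<in>phiw a b S js ` {c..d}. F' x \<noteq> 0"
      "distortion (phiw a b S js ` {c..d}) F' < 1/2"
      "F ` (phiw a b S (js @ ps) ` gapJ a b i) = gapJ a b j" by simp_all
    have C1: "\<forall>j\<in>{1..k}. C1_on {a j..b j} S S'" and onto: "\<forall>j\<in>{1..k}. S ` {a j..b j} = {c..d}"
      and big: "\<forall>x\<in>Iset k a b. \<bar>S' x\<bar> > 1" and NSe: "NS k a b S' < \<epsilon>"
      and hold: "\<forall>j\<in>{1..k}. \<forall>x\<in>{a j..b j}. \<forall>y\<in>{a j..b j}.
        \<bar>ln (\<bar>S' x\<bar> / \<bar>S' y\<bar>)\<bar> \<le> M * \<bar>x - y\<bar> powr \<alpha>"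
      using H(2) unfolding in_A_def in_S_class_def by auto
    have lam: "\<forall>jj\<in>{1..k}. \<forall>x\<in>{a jj..b jj}. 1 \<le> r * \<bar>S' x\<bar>"
    proof (intro ballI)
      fix jj x assume jj: "jj \<in> {1..k}" and x: "x \<in> {a jj..b jj}"
      have C1j: "C1_on {a jj..b jj} S S'" using C1 jj by blast
      have "c \<in> S ` {a jj..b jj}" "d \<in> S ` {a jj..b jj}" using onto jj cd by auto
      then obtain \<xi>1 \<xi>2 where \<xi>12: "\<xi>1 \<in> {a jj..b jj}" "S \<xi>1 = c" "\<xi>2 \<in> {a jj..b jj}" "S \<xi>2 = d"
        by blast
      obtain \<xi> where \<xi>: "\<xi> \<in> {a jj..b jj}" "S \<xi>2 - S \<xi>1 = S' \<xi> * (\<xi>2 - \<xi>1)"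
        using mvt_iv[OF is_interval_cc _ \<xi>12(1,3)] C1j unfolding C1_on_def by blast
      have "\<bar>\<xi>2 - \<xi>1\<bar> \<le> w" using \<xi>12(1,3) wge[OF jj] by auto
      moreover have "d - c = \<bar>S' \<xi>\<bar> * \<bar>\<xi>2 - \<xi>1\<bar>"
      proof -
        have "d - c = \<bar>d - c\<bar>" using cd by simp
        also have "\<dots> = \<bar>S' \<xi> * (\<xi>2 - \<xi>1)\<bar>" using \<xi>(2) \<xi>12 by simp
        finally show ?thesis by (simp add: abs_mult)
      qed
      ultimately have "d - c \<le> \<bar>S' \<xi>\<bar> * w" by (metis abs_ge_zero mult_left_mono)
      then have \<rho>le: "\<rho> \<le> \<bar>S' \<xi>\<bar>" unfolding \<rho>_def using wpos by (simp add: divide_le_eq)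
      have inI: "{a jj..b jj} \<subseteq> Iset k a b" unfolding Iset_def using jj by blast
      have nz: "\<forall>y\<in>{a jj..b jj}. S' y \<noteq> 0" using big inI by fastforce
      have contS: "continuous_on {a jj..b jj} S'" using C1j unfolding C1_on_def by blast
      have "ln (\<bar>S' \<xi>\<bar> / \<bar>S' x\<bar>) \<le> distortion {a jj..b jj} S'"
        by (rule distortion_ge[OF compact_Icc contS nz \<xi>(1) x])
      also have "\<dots> \<le> NS k a b S'" unfolding NS_def using jj by (intro Max_ge) auto
      also have "\<dots> < \<epsilon>0" using NSe H(1) by simp
      finally have lt: "ln (\<bar>S' \<xi>\<bar> / \<bar>S' x\<bar>) < \<epsilon>0" .
      have pos: "0 < \<bar>S' \<xi>\<bar> / \<bar>S' x\<bar>" using nz x \<xi>(1) by simp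
      have "\<bar>S' \<xi>\<bar> / \<bar>S' x\<bar> < exp \<epsilon>0" using lt pos by (metis exp_less_cancel_iff exp_ln)
      then have "\<bar>S' \<xi>\<bar> < exp \<epsilon>0 * \<bar>S' x\<bar>" using nz x by (simp add: divide_less_eq)
      with \<rho>le \<rho>exp have "exp \<epsilon>0 * exp \<epsilon>0 < exp \<epsilon>0 * \<bar>S' x\<bar>" by linarith
      then have "exp \<epsilon>0 < \<bar>S' x\<bar>" by simp
      then have "r * exp \<epsilon>0 \<le> r * \<bar>S' x\<bar>" using r by simp
      then show "1 \<le> r * \<bar>S' x\<bar>" using rinv by simp
    qed
    interpret ctx k a b c d M \<alpha> r S S'
      using sett C1 onto lam r hold assms(2,3) by unfold_locales auto
    define f where "f = phiw a b S js"
    define T where "T = f ` {c..d}"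
    define m where "m = length js"
    define p where "p = length ps"
    have MJ1: "\<And>x. x \<in> {c..d} \<Longrightarrow> f x \<in> {c..d}"
      and MJ2: "\<And>x y. x \<in> {c..d} \<Longrightarrow> y \<in> {c..d} \<Longrightarrow> \<bar>f x - f y\<bar> \<le> r ^ m * \<bar>x - y\<bar>"
      and MJ3: "\<And>x y u v. x \<in> {c..d} \<Longrightarrow> y \<in> {c..d} \<Longrightarrow> u \<in> {c..d} \<Longrightarrow> v \<in> {c..d} \<Longrightarrow>
         \<bar>f x - f y\<bar> * \<bar>v - u\<bar> \<le> exp (Dn m) * \<bar>x - y\<bar> * \<bar>f v - f u\<bar>"
      using main_ind[OF H(3)] unfolding f_def m_def by blast+
    have MP1: "\<And>x. x \<in> {c..d} \<Longrightarrow> phiw a b S ps x \<in> {c..d}"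
      and MP2: "\<And>x y. x \<in> {c..d} \<Longrightarrow> y \<in> {c..d} \<Longrightarrow>
          \<bar>phiw a b S ps x - phiw a b S ps y\<bar> \<le> r ^ p * \<bar>x - y\<bar>"
      using main_ind[OF H(4)] unfolding p_def by blast+
    have contf: "continuous_on {c..d} f"
      unfolding continuous_on_iff
    proof (intro ballI allI impI)
      fix x e :: real assume x: "x \<in> {c..d}" and e: "0 < e"
      show "\<exists>d'>0. \<forall>x'\<in>{c..d}. dist x' x < d' \<longrightarrow> dist (f x') (f x) < e"
      proof (intro exI[of _ e] conjI ballI impI e)
        fix x' assume x': "x' \<in> {c..d}" and dx: "dist x' x < e"
        have "\<bar>f x' - f x\<bar> \<le> r ^ m * \<bar>x' - x\<bar>" using MJ2 x x' by blast
        also have "\<dots> \<le> 1 * \<bar>x' - x\<bar>" using r by (intro mult_right_mono power_le_one) auto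
        finally show "dist (f x') (f x) < e" using dx by (simp add: dist_real_def)
      qed
    qed
    have Tint: "is_interval T" unfolding T_def is_interval_connected_1
      by (rule connected_continuous_image[OF contf connected_Icc])
    have Tcomp: "compact T" unfolding T_def by (rule compact_continuous_image[OF contf compact_Icc])
    have FC1: "C1_on T F F'" using H(7) unfolding T_def f_def .
    have Fder: "\<forall>x\<in>T. (F has_real_derivative F' x) (at x within T)"
      and F'cont: "continuous_on T F'" using FC1 unfolding C1_on_def by auto
    have FT: "\<And>x. x \<in> T \<Longrightarrow> F x \<in> {c..d}" using H(8) unfolding T_def f_def by blast
    have F'nz: "\<forall>x\<in>T. F' x \<noteq> 0" using H(9) unfolding T_def f_def .
    have Fdist: "distortion T F' < 1/2" using H(10) unfolding T_def f_def .
    have iK: "i \<in> {1..<k}" "i \<in> {1..k}" "Suc i \<in> {1..k}" using H(5) k2 by auto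
    have jK: "j \<in> {1..<k}" "j \<in> {1..k}" "Suc j \<in> {1..k}" using H(6) k2 by auto
    have gi: "gapJ a b i \<subseteq> {c..d}"
    proof -
      have "c \<le> a i" "a i \<le> b i" "a (Suc i) \<le> b (Suc i)" "b (Suc i) \<le> d"
        using IL' ab iK by auto
      then show ?thesis unfolding gapJ_def by auto
    qed
    have bj: "b j < a (Suc j)" using ba jK by blast
    define Jj where "Jj = a (Suc j) - b j"
    have Jj: "Jj > 0" "Jmin \<le> Jj" unfolding Jj_def using bj Jle[OF H(6)] by auto
    define t1 where "t1 = b j + Jj / 4"
    define t2 where "t2 = b j + 3 * Jj / 4"
    have "t1 \<in> gapJ a b j" "t2 \<in> gapJ a b j" unfolding gapJ_def t1_def t2_def Jj_def using bj by (auto simp: field_simps)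
    then have "t1 \<in> F ` (phiw a b S (js @ ps) ` gapJ a b i)" "t2 \<in> F ` (phiw a b S (js @ ps) ` gapJ a b i)"
      using H(11) by auto
    then obtain x0 y0 where x0: "x0 \<in> gapJ a b i" "F (phiw a b S (js @ ps) x0) = t1"
      and y0: "y0 \<in> gapJ a b i" "F (phiw a b S (js @ ps) y0) = t2" by blast
    define p0 where "p0 = phiw a b S ps x0"
    define p1 where "p1 = phiw a b S ps y0"
    have x0L: "x0 \<in> {c..d}" and y0L: "y0 \<in> {c..d}" using x0(1) y0(1) gi by auto
    have p01: "p0 \<in> {c..d}" "p1 \<in> {c..d}" unfolding p0_def p1_def using MP1 x0L y0L by auto
    have FX: "F (f p0) = t1" and FY: "F (f p1) = t2"
      using x0(2) y0(2) unfolding p0_def p1_def f_def by (simp_all add: phiw_append)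
    have XT: "f p0 \<in> T" "f p1 \<in> T" "f c \<in> T" "f d \<in> T" unfolding T_def using p01 cd by auto
    obtain \<xi> where \<xi>: "\<xi> \<in> T" "F (f p1) - F (f p0) = F' \<xi> * (f p1 - f p0)"
      using mvt_iv[OF Tint Fder XT(1,2)] by blast
    obtain \<eta> where \<eta>: "\<eta> \<in> T" "F (f d) - F (f c) = F' \<eta> * (f d - f c)"
      using mvt_iv[OF Tint Fder XT(3,4)] by blast
    have Fcd: "\<bar>F (f d) - F (f c)\<bar> \<le> d - c" using FT[OF XT(3)] FT[OF XT(4)] by auto
    have e4: "\<bar>f p1 - f p0\<bar> * \<bar>d - c\<bar> \<le> exp (Dn m) * \<bar>p1 - p0\<bar> * \<bar>f d - f c\<bar>"
      using MJ3[OF p01(2) p01(1), of c d] cd by simp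
    have e5: "\<bar>p1 - p0\<bar> \<le> r ^ p * (d - c)"
    proof -
      have "\<bar>p1 - p0\<bar> \<le> r ^ p * \<bar>y0 - x0\<bar>" unfolding p0_def p1_def using MP2 x0L y0L by blast
      also have "\<dots> \<le> r ^ p * (d - c)" using x0L y0L r by (intro mult_left_mono) auto
      finally show ?thesis .
    qed
    have e6: "\<bar>F' \<xi>\<bar> \<le> exp (1/2) * \<bar>F' \<eta>\<bar>"
    proof -
      have "ln (\<bar>F' \<xi>\<bar> / \<bar>F' \<eta>\<bar>) \<le> distortion T F'"
        by (rule distortion_ge[OF Tcomp F'cont F'nz \<xi>(1) \<eta>(1)])
      then have "ln (\<bar>F' \<xi>\<bar> / \<bar>F' \<eta>\<bar>) \<le> 1/2" using Fdist by simp
      moreover have "0 < \<bar>F' \<xi>\<bar> / \<bar>F' \<eta>\<bar>" using F'nz \<xi>(1) \<eta>(1) by simp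
      ultimately have "\<bar>F' \<xi>\<bar> / \<bar>F' \<eta>\<bar> \<le> exp (1/2)" by (metis exp_le_cancel_iff exp_ln)
      then show ?thesis using F'nz \<eta>(1) by (simp add: divide_le_eq)
    qed
    have Feq: "\<bar>F' \<eta>\<bar> * \<bar>f d - f c\<bar> = \<bar>F (f d) - F (f c)\<bar>"
      using \<eta>(2) by (simp add: abs_mult)
    have DnD: "Dn m \<le> Dmax" unfolding Dmax_def by (rule Dn_le)
    have "Jj / 2 * (d - c) = \<bar>F (f p1) - F (f p0)\<bar> * \<bar>d - c\<bar>"
      using FX FY cd Jj(1) unfolding t1_def t2_def by simp
    also have "\<dots> = \<bar>F' \<xi>\<bar> * (\<bar>f p1 - f p0\<bar> * \<bar>d - c\<bar>)" using \<xi>(2) by (simp add: abs_mult)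
    also have "\<dots> \<le> \<bar>F' \<xi>\<bar> * (exp (Dn m) * \<bar>p1 - p0\<bar> * \<bar>f d - f c\<bar>)"
      using e4 by (intro mult_left_mono) auto
    also have "\<dots> \<le> (exp (1/2) * \<bar>F' \<eta>\<bar>) * (exp (Dn m) * (r ^ p * (d - c)) * \<bar>f d - f c\<bar>)"
      using e5 e6 by (intro mult_mono) (auto intro!: mult_right_mono mult_left_mono)
    also have "\<dots> = exp (1/2) * exp (Dn m) * r ^ p * (d - c) * (\<bar>F' \<eta>\<bar> * \<bar>f d - f c\<bar>)"
      by (simp add: mult_ac)
    also have "\<dots> = exp (1/2) * exp (Dn m) * r ^ p * (d - c) * \<bar>F (f d) - F (f c)\<bar>"
      using Feq by simp
    also have "\<dots> \<le> exp (1/2) * exp (Dn m) * r ^ p * (d - c) * (d - c)"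
      using Fcd cd r by (intro mult_left_mono) auto
    finally have F1: "Jj / 2 * (d - c) \<le> (exp (1/2) * exp (Dn m) * r ^ p * (d - c)) * (d - c)" by simp
    have "Jj / 2 \<le> exp (1/2) * exp (Dn m) * r ^ p * (d - c)"
      by (rule mult_right_le_imp_le[OF F1]) (use cd in simp)
    also have "\<dots> \<le> exp (1/2) * exp Dmax * r ^ p * (d - c)"
      using DnD cd r by (intro mult_right_mono) auto
    finally have J2: "Jj / 2 \<le> exp (1/2) * exp Dmax * r ^ p * (d - c)" .
    have "Jj * (exp \<epsilon>0) ^ p / 2 \<le> exp (1/2) * exp Dmax * (r ^ p * (exp \<epsilon>0) ^ p) * (d - c)"
      using mult_right_mono[OF J2, of "(exp \<epsilon>0) ^ p"] by (simp add: algebra_simps)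
    also have "r ^ p * (exp \<epsilon>0) ^ p = 1" using rinv by (simp flip: power_mult_distrib)
    finally have "Jj * (exp \<epsilon>0) ^ p \<le> 2 * exp (1/2 + Dmax) * (d - c)" by (simp add: exp_add)
    moreover have "Jmin * (exp \<epsilon>0) ^ p \<le> Jj * (exp \<epsilon>0) ^ p" using Jj by (intro mult_right_mono) auto
    ultimately have "Jmin * (exp \<epsilon>0) ^ p \<le> 2 * exp (1/2 + Dmax) * (d - c)" by linarith
    then have Kp: "(exp \<epsilon>0) ^ p \<le> K" unfolding K_def using Jpos by (simp add: field_simps)
    show "length ps \<le> l"
    proof (rule ccontr)
      assume "\<not> length ps \<le> l"
      then have "l \<le> p" unfolding p_def by simp
      then have "(exp \<epsilon>0) ^ l \<le> (exp \<epsilon>0) ^ p" using \<epsilon>0pos by (intro power_increasing) auto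
      with Kp l show False by linarith
    qed
  qed
qed

end
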